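(* Let $G=(V,E)$ be a hypergraph, let $(Y_1,Y_2,W,Z)$ be a partition of $V$, and let $A_1:=Y_1\cup W$ and $A_2:=Y_2\cup W$. Then \[d(A_1)+d(A_2)=\sigma(Y_1,Y_2,W,Z).\]
   Context: A hypergraph $G=(V,E)$ has finite vertex set $V$ and finite multiset $E$ of hyperedges (subsets of $V$). For $X\subseteq V$, $d(X)$ is the number of hyperedges meeting both $X$ and $V\setminus X$. For a partition $(Y_1,\dots,Y_p,W,Z)$ of $V$: $\mathrm{cost}(Y_1,\dots,Y_p,W,Z)$ is the number of hyperedges meeting at least two of its parts; $\mathrm{cost}(W,Z)$ is the number of hyperedges $e$ with $e\subseteq W\cup Z$, $e\cap W\ne\emptyset$, $e\cap Z\neq\emptyset$; $\alpha(Y_1,\dots,Y_p,W,Z)$ is the number of hyperedges that meet $Z$ and meet at least two of the sets $Y_1,\dots,Y_p,W$; $\beta(Y_1,\dots,Y_p,Z)$ is the number of hyperedges disjoint from $Z$ that meet at least two of $Y_1,\dots,Y_p$; and $\sigma(Y_1,\dots,Y_p,W,Z):=\mathrm{cost}(Y_1,\dots,Y_p,W,Z)+\mathrm{cost}(W,Z)+\alpha(Y_1,\dots,Y_p,W,Z)+\beta(Y_1,\dots,Y_p,Z)$. *)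

theory Defs
  imports Main "HOL-Library.Multiset"
begin

definition hypergraph :: "'a set \<Rightarrow> 'a set multiset \<Rightarrow> bool" where
  "hypergraph V E \<longleftrightarrow> finite V \<and> (\<forall>e \<in># E. e \<subseteq> V)"

definition meets :: "'a set \<Rightarrow> 'a set \<Rightarrow> bool" where
  "meets e X \<longleftrightarrow> e \<inter> X \<noteq> {}"

definition dcut :: "'a set \<Rightarrow> 'a set multiset \<Rightarrow> 'a set \<Rightarrow> nat" where
  "dcut V E X = size (filter_mset (\<lambda>e. meets e X \<and> meets e (V - X)) E)"

definition num_met :: "'a set \<Rightarrow> 'a set list \<Rightarrow> nat" where
  "num_met e Ps = card {i. i < length Ps \<and> meets e (Ps ! i)}"

definition cost :: "'a set multiset \<Rightarrow> 'a set list \<Rightarrow> nat" where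
  "cost E Ps = size (filter_mset (\<lambda>e. 2 \<le> num_met e Ps) E)"

definition costWZ :: "'a set multiset \<Rightarrow> 'a set \<Rightarrow> 'a set \<Rightarrow> nat" where
  "costWZ E W Z = size (filter_mset (\<lambda>e. e \<subseteq> W \<union> Z \<and> meets e W \<and> meets e Z) E)"

definition alpha :: "'a set multiset \<Rightarrow> 'a set list \<Rightarrow> 'a set \<Rightarrow> 'a set \<Rightarrow> nat" where
  "alpha E Ys W Z = size (filter_mset (\<lambda>e. meets e Z \<and> 2 \<le> num_met e (Ys @ [W])) E)"

definition beta :: "'a set multiset \<Rightarrow> 'a set list \<Rightarrow> 'a set \<Rightarrow> nat" where
  "beta E Ys Z = size (filter_mset (\<lambda>e. \<not> meets e Z \<and> 2 \<le> num_met e Ys) E)"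

definition sigma :: "'a set multiset \<Rightarrow> 'a set list \<Rightarrow> 'a set \<Rightarrow> 'a set \<Rightarrow> nat" where
  "sigma E Ys W Z = cost E (Ys @ [W, Z]) + costWZ E W Z + alpha E Ys W Z + beta E Ys Z"

end

theory Submission
  imports Defs
begin

lemma num_met_sum: "num_met e Ps = (\<Sum>i<length Ps. if meets e (Ps ! i) then 1 else 0)"
proof -
  have "{i. i < length Ps \<and> meets e (Ps ! i)} = {..<length Ps} \<inter> {i. meets e (Ps ! i)}" by auto
  then show ?thesis unfolding num_met_def by (simp add: sum.If_cases)
qed

lemma num_met4: "num_met e [A,B,C,D] = (if meets e A then 1 else 0) + (if meets e B then 1 else 0)
   + (if meets e C then 1 else 0) + (if meets e D then 1 else 0)"
  unfolding num_met_sum by (simp add: numeral_eq_Suc lessThan_Suc)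

lemma num_met3: "num_met e [A,B,C] = (if meets e A then 1 else 0) + (if meets e B then 1 else 0)
   + (if meets e C then 1 else 0)"
  unfolding num_met_sum by (simp add: numeral_eq_Suc lessThan_Suc)

lemma num_met2: "num_met e [A,B] = (if meets e A then 1 else 0) + (if meets e B then 1 else 0)"
  unfolding num_met_sum by (simp add: numeral_eq_Suc lessThan_Suc)

lemma size_filter_add: "size (filter_mset P (add_mset x M)) = size (filter_mset P M) + (if P x then 1 else 0)"
  by simp

lemma arith6: "(a::nat) + b = c + d + e + f \<Longrightarrow> i1 + i2 = j1 + j2 + j3 + j4 \<Longrightarrow>
  a + i1 + (b + i2) = c + j1 + (d + j2) + (e + j3) + (f + j4)"
  by linarith

lemma sub_WZ: "e \<subseteq> Y1 \<union> Y2 \<union> W \<union> Z \<Longrightarrow> Y1 \<inter> W = {} \<Longrightarrow> Y1 \<inter> Z = {} \<Longrightarrow> Y2 \<inter> W = {} \<Longrightarrow> Y2 \<inter> Z = {} \<Longrightarrow>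
  (e \<subseteq> W \<union> Z) = (\<not> meets e Y1 \<and> \<not> meets e Y2)"
  unfolding meets_def by blast

theorem proposition3p2:
  fixes V :: "'a set" and E :: "'a set multiset" and Y1 Y2 W Z :: "'a set"
  assumes "hypergraph V E"
    and "Y1 \<union> Y2 \<union> W \<union> Z = V"
    and "Y1 \<inter> Y2 = {}" "Y1 \<inter> W = {}" "Y1 \<inter> Z = {}"
    and "Y2 \<inter> W = {}" "Y2 \<inter> Z = {}" "W \<inter> Z = {}"
  shows "dcut V E (Y1 \<union> W) + dcut V E (Y2 \<union> W) = sigma E [Y1, Y2] W Z"
proof -
  have sub: "\<forall>e\<in>#E. e \<subseteq> V" using assms(1) unfolding hypergraph_def by auto
  have c1: "V - (Y1 \<union> W) = Y2 \<union> Z" and c2: "V - (Y2 \<union> W) = Y1 \<union> Z"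
    using assms(2-8) by auto
  have edge: "(if meets e (Y1 \<union> W) \<and> meets e (V - (Y1 \<union> W)) then 1 else 0)
     + (if meets e (Y2 \<union> W) \<and> meets e (V - (Y2 \<union> W)) then 1 else 0)
     = (if 2 \<le> num_met e [Y1, Y2, W, Z] then 1 else 0)
     + (if e \<subseteq> W \<union> Z \<and> meets e W \<and> meets e Z then 1 else 0)
     + (if meets e Z \<and> 2 \<le> num_met e [Y1, Y2, W] then 1 else 0)
     + (if \<not> meets e Z \<and> 2 \<le> num_met e [Y1, Y2] then (1::nat) else 0)"
    if "e \<subseteq> V" for e
  proof -
    have s: "e \<subseteq> W \<union> Z \<longleftrightarrow> \<not> meets e Y1 \<and> \<not> meets e Y2"
      using that assms(2,4,5,6,7) by (intro sub_WZ) simp_all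
    have u: "meets e (A \<union> B) \<longleftrightarrow> meets e A \<or> meets e B" for A B
      unfolding meets_def by auto
    show ?thesis unfolding c1 c2 s u num_met4 num_met3 num_met2
      by (cases "meets e Y1"; cases "meets e Y2"; cases "meets e W"; cases "meets e Z"; simp)
  qed
  show ?thesis
    using sub unfolding dcut_def sigma_def cost_def costWZ_def alpha_def beta_def
  proof (induction E)
    case empty
    then show ?case by simp
  next
    case (add x E)
    have "x \<subseteq> V" using add.prems by simp
    moreover have "\<forall>e\<in>#E. e \<subseteq> V" using add.prems by simp
    ultimately have h1: "(if meets x (Y1 \<union> W) \<and> meets x (V - (Y1 \<union> W)) then 1 else 0) +
     (if meets x (Y2 \<union> W) \<and> meets x (V - (Y2 \<union> W)) then 1 else 0) =
     (if 2 \<le> num_met x [Y1, Y2, W, Z] then 1 else 0) +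
     (if x \<subseteq> W \<union> Z \<and> meets x W \<and> meets x Z then 1 else 0) +
     (if meets x Z \<and> 2 \<le> num_met x [Y1, Y2, W] then 1 else 0) +
     (if \<not> meets x Z \<and> 2 \<le> num_met x [Y1, Y2] then (1::nat) else 0)" and h2: "size {#e \<in># E. meets e (Y1 \<union> W) \<and> meets e (V - (Y1 \<union> W))#} +
     size {#e \<in># E. meets e (Y2 \<union> W) \<and> meets e (V - (Y2 \<union> W))#} =
     size {#e \<in># E. 2 \<le> num_met e [Y1, Y2, W, Z]#} +
     size {#e \<in># E. e \<subseteq> W \<union> Z \<and> meets e W \<and> meets e Z#} +
     size {#e \<in># E. meets e Z \<and> 2 \<le> num_met e [Y1, Y2, W]#} +
     size {#e \<in># E. \<not> meets e Z \<and> 2 \<le> num_met e [Y1, Y2]#}" using edge[of x] add.IH by simp_all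
    show ?case unfolding size_filter_add append_Cons append_Nil by (rule arith6[OF h2 h1])
  qed
qed

end
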